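(* Let $(\alpha,\theta)\in\Omega$. Let $\varphi$ be the solution of $\varphi'^2=P_{\alpha,\theta}(\cos\varphi)$ such that $\varphi(0)=0$ and $\varphi'(0)\le0$. Then: 1. $\varphi'(u)<0$ for all $u$; 2. $\varphi$ is a decreasing bijection from $\mathbb{R}$ onto $\mathbb{R}$; 3. there exists a real number $U>0$ such that $\varphi(u+U)=\varphi(u)-\pi$ for all $u\in\mathbb{R}$; 4. $\varphi$ is odd.
   Context: For $\alpha>0$ and $\theta\in\mathbb{R}$ set $C_{\alpha,\theta}=\frac{\sin(2\theta)}{2\alpha}$ and $P_{\alpha,\theta}(x)=\alpha^2+\cos(2\theta)x^2-C_{\alpha,\theta}^2x^4$. Let $\theta^+_\alpha=\pi/2$ if $\alpha>1$, and $\theta^+_\alpha=\frac12\arccos(1-2\alpha^2)$ if $\alpha\le1$. Set $\Omega=\{(\alpha,\theta)\in\mathbb{R}^2:\alpha>0,\ -\theta^+_\alpha<\theta<\theta^+_\alpha\}$. *)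

theory Defs
  imports Complex_Main
begin

definition C_at :: "real \<Rightarrow> real \<Rightarrow> real" where
  "C_at \<alpha> \<theta> = sin (2 * \<theta>) / (2 * \<alpha>)"

definition P_at :: "real \<Rightarrow> real \<Rightarrow> real \<Rightarrow> real" where
  "P_at \<alpha> \<theta> x = \<alpha>^2 + cos (2 * \<theta>) * x^2 - (C_at \<alpha> \<theta>)^2 * x^4"

definition theta_plus :: "real \<Rightarrow> real" where
  "theta_plus \<alpha> = (if \<alpha> > 1 then pi / 2 else arccos (1 - 2 * \<alpha>^2) / 2)"

definition Omega :: "(real \<times> real) set" where
  "Omega = {(\<alpha>, \<theta>). \<alpha> > 0 \<and> - theta_plus \<alpha> < \<theta> \<and> \<theta> < theta_plus \<alpha>}"

end

theory Submission
  imports Defs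
begin

lemma darboux0:
  fixes f f' :: "real \<Rightarrow> real"
  assumes ab: "a < b" and d: "\<And>x. (f has_real_derivative f' x) (at x)"
    and fa: "f' a < 0" and fb: "f' b > 0"
  shows "\<exists>c. a < c \<and> c < b \<and> f' c = 0"
proof -
  have cont: "continuous_on {a..b} f"
    using d by (meson DERIV_continuous continuous_at_imp_continuous_on)
  obtain c where c: "c \<in> {a..b}" and cmin: "\<forall>y\<in>{a..b}. f c \<le> f y"
    using continuous_attains_inf[OF compact_Icc _ cont] ab by auto
  obtain d1 where d1: "d1 > 0" "\<forall>h>0. h < d1 \<longrightarrow> f a > f (a + h)"
    using DERIV_neg_dec_right[OF d fa] by blast
  obtain d2 where d2: "d2 > 0" "\<forall>h>0. h < d2 \<longrightarrow> f (b - h) < f b"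
    using DERIV_pos_inc_left[OF d fb] by blast
  define h1 where "h1 = min (d1/2) ((b-a)/2)"
  define h2 where "h2 = min (d2/2) ((b-a)/2)"
  have "h1 > 0" "h1 < d1" "h1 \<le> (b-a)/2" using d1 ab by (auto simp: h1_def min_def)
  then have "f (a + h1) < f a" "a + h1 \<in> {a..b}" using d1 by auto
  then have "c \<noteq> a" using cmin by (metis leD)
  have "h2 > 0" "h2 < d2" "h2 \<le> (b-a)/2" using d2 ab by (auto simp: h2_def min_def)
  then have "f (b - h2) < f b" "b - h2 \<in> {a..b}" using d2 by auto
  then have "c \<noteq> b" using cmin by (metis leD)
  have ca: "a < c" "c < b" using c \<open>c \<noteq> a\<close> \<open>c \<noteq> b\<close> by auto
  have "f' c = 0"
  proof (rule DERIV_local_min[OF d[of c], where d="min (c-a) (b-c)"])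
    show "0 < min (c - a) (b - c)" using ca by auto
    show "\<forall>y. \<bar>c - y\<bar> < min (c - a) (b - c) \<longrightarrow> f c \<le> f y"
      using cmin by (auto simp: abs_less_iff)
  qed
  then show ?thesis using ca by blast
qed

lemma ode_unique:
  fixes \<phi> \<psi> F :: "real \<Rightarrow> real"
  assumes d\<phi>: "\<And>u. (\<phi> has_real_derivative F (\<phi> u)) (at u)"
    and d\<psi>: "\<And>u. (\<psi> has_real_derivative F (\<psi> u)) (at u)"
    and F: "\<And>y. F y \<noteq> 0"
    and inj: "inj \<psi>" and surj: "surj \<psi>"
    and init: "\<phi> 0 = \<psi> 0"
  shows "\<phi> u = \<psi> u"
proof -
  define g where "g = inv \<psi>"
  have g\<psi>: "g (\<psi> x) = x" for x by (simp add: g_def inv_f_f inj)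
  have \<psi>g: "\<psi> (g y) = y" for y using surj by (simp add: g_def surj_f_inv_f)
  have cont\<psi>: "isCont \<psi> z" for z using d\<psi> DERIV_isCont by blast
  have contg: "isCont g y" for y
    using isCont_inverse_function[where d=1 and x="g y" and g=g and f=\<psi>] g\<psi> cont\<psi> \<psi>g by auto
  have dg: "(g has_real_derivative inverse (F y)) (at y)" for y
  proof -
    have "(g has_real_derivative inverse (F (\<psi> (g y)))) (at y)"
      by (rule DERIV_inverse_function[where f=\<psi> and g=g and x=y and a="y-1" and b="y+1"])
         (use d\<psi>[of "g y"] in \<open>auto simp: \<psi>g F contg\<close>)
    then show ?thesis by (simp add: \<psi>g)
  qed
  have dw: "((\<lambda>u. g (\<phi> u) - u) has_real_derivative 0) (at u)" for u
  proof -
    have "((\<lambda>u. g (\<phi> u)) has_real_derivative inverse (F (\<phi> u)) * F (\<phi> u)) (at u)"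
      by (rule DERIV_chain2[OF dg d\<phi>])
    then have "((\<lambda>u. g (\<phi> u)) has_real_derivative 1) (at u)" using F by simp
    then show ?thesis using DERIV_diff[OF _ DERIV_ident] by fastforce
  qed
  have "g (\<phi> u) - u = g (\<phi> 0) - 0" by (rule DERIV_isconst_all) (use dw in blast)
  then have "g (\<phi> u) = u" using init g\<psi> by simp
  then show ?thesis using \<psi>g by metis
qed

lemma omega_cos:
  assumes "(\<alpha>, \<theta>) \<in> Omega"
  shows "\<alpha> > 0" "cos (2*\<theta>) > 1 - 2*\<alpha>^2"
proof -
  show a: "\<alpha> > 0" using assms by (auto simp: Omega_def)
  show "cos (2*\<theta>) > 1 - 2*\<alpha>^2"
  proof (cases "\<alpha> > 1")
    case True
    have "\<alpha>^2 > 1" using True by (simp add: one_less_power)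
    then show ?thesis using cos_ge_minus_one[of "2*\<theta>"] by linarith
  next
    case False
    define a where "a = 1 - 2*\<alpha>^2"
    have a1: "-1 \<le> a" "a \<le> 1" using False a unfolding a_def
      by (auto simp: power2_eq_square intro: mult_le_one)
    have th: "\<bar>\<theta>\<bar> < arccos a / 2" using assms False
      by (auto simp: Omega_def theta_plus_def a_def)
    have b: "arccos a \<le> pi" "0 \<le> arccos a" using arccos_bounded[OF a1] by auto
    have "cos (arccos a) < cos \<bar>2*\<theta>\<bar>"
      by (subst cos_mono_less_eq) (use th b in auto)
    moreover have "cos \<bar>2*\<theta>\<bar> = cos (2*\<theta>)" by (simp add: abs_if)
    ultimately show ?thesis using a1 by (simp add: a_def)
  qed
qed

lemma P_lower:
  fixes \<alpha> c s t :: real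
  assumes a: "\<alpha> > 0" and c: "c > 1 - 2*\<alpha>^2" and sc: "s^2 + c^2 = 1"
    and t: "0 \<le> t" "t \<le> 1"
  shows "\<alpha>^2 + c*t - (s/(2*\<alpha>))^2 * t^2 \<ge> min (\<alpha>^2) (\<alpha>^2 + c - (s/(2*\<alpha>))^2)"
    and "min (\<alpha>^2) (\<alpha>^2 + c - (s/(2*\<alpha>))^2) > 0"
proof -
  define K where "K = (s/(2*\<alpha>))^2"
  have K0: "K \<ge> 0" by (simp add: K_def)
  have id: "\<alpha>^2 + c*t - K*t^2 = (1-t)*\<alpha>^2 + t*(\<alpha>^2+c-K) + K*t*(1-t)"
    by (simp add: algebra_simps power2_eq_square)
  have "K*t*(1-t) \<ge> 0" using K0 t by simp
  moreover have "(1-t)*\<alpha>^2 + t*(\<alpha>^2+c-K) \<ge> (1-t)*min (\<alpha>^2) (\<alpha>^2+c-K) + t*min (\<alpha>^2) (\<alpha>^2+c-K)"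
    using t by (intro add_mono mult_left_mono) auto
  moreover have "(1-t)*min (\<alpha>^2) (\<alpha>^2+c-K) + t*min (\<alpha>^2) (\<alpha>^2+c-K) = min (\<alpha>^2) (\<alpha>^2+c-K)"
    by (simp add: algebra_simps)
  ultimately have "\<alpha>^2 + c*t - K*t^2 \<ge> min (\<alpha>^2) (\<alpha>^2 + c - K)"
    using id by linarith
  then show "\<alpha>^2 + c*t - (s/(2*\<alpha>))^2 * t^2 \<ge> min (\<alpha>^2) (\<alpha>^2 + c - (s/(2*\<alpha>))^2)"
    by (simp add: K_def)
  have "4*\<alpha>^2 * (\<alpha>^2 + c - K) = (c + 2*\<alpha>^2)^2 - 1"
  proof -
    have s2: "s^2 = 1 - c^2" using sc by simp
    have K_eq: "K = (1-c^2)/(4*\<alpha>^2)" by (simp add: K_def power_divide s2 power_mult_distrib)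
    show ?thesis using a by (simp add: K_eq field_simps eval_nat_numeral)
  qed
  moreover have "(c + 2*\<alpha>^2)^2 > 1"
  proof -
    have "c + 2*\<alpha>^2 > 1" using c by simp
    then show ?thesis by (simp add: one_less_power)
  qed
  ultimately have "4*\<alpha>^2 * (\<alpha>^2 + c - K) > 0" by simp
  then have "\<alpha>^2 + c - K > 0" using a by (simp add: zero_less_mult_iff)
  then show "min (\<alpha>^2) (\<alpha>^2 + c - (s/(2*\<alpha>))^2) > 0" using a by (simp add: K_def)
qed


theorem lemma4p2:
  fixes \<alpha> \<theta> :: real and \<phi> \<phi>' :: "real \<Rightarrow> real"
  assumes "(\<alpha>, \<theta>) \<in> Omega"
    and "\<And>u. (\<phi> has_real_derivative \<phi>' u) (at u)"
    and "\<And>u. (\<phi>' u)^2 = P_at \<alpha> \<theta> (cos (\<phi> u))"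
    and "\<phi> 0 = 0"
    and "\<phi>' 0 \<le> 0"
  shows "(\<forall>u. \<phi>' u < 0)
    \<and> (\<forall>x y. x < y \<longrightarrow> \<phi> y < \<phi> x) \<and> bij \<phi>
    \<and> (\<exists>U>0. \<forall>u. \<phi> (u + U) = \<phi> u - pi)
    \<and> (\<forall>u. \<phi> (- u) = - \<phi> u)"
proof -
  note om = assms(1) and d = assms(2) and sq = assms(3) and i0 = assms(4) and n0 = assms(5)
  have a: "\<alpha> > 0" and c: "cos (2*\<theta>) > 1 - 2*\<alpha>^2" using omega_cos[OF om] by auto
  define m where "m = min (\<alpha>^2) (\<alpha>^2 + cos (2*\<theta>) - (sin (2*\<theta>)/(2*\<alpha>))^2)"
  have m0: "m > 0" using P_lower(2)[OF a c, of "sin (2*\<theta>)" 0] by (simp add: m_def)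
  have Pm: "P_at \<alpha> \<theta> (cos y) \<ge> m" for y
  proof -
    have "(cos y)^2 \<le> 1" by (simp add: cos_squared_eq)
    then have "\<alpha>^2 + cos (2*\<theta>) * (cos y)^2 - (sin (2*\<theta>)/(2*\<alpha>))^2 * ((cos y)^2)^2 \<ge> m"
      using P_lower(1)[OF a c, of "sin (2*\<theta>)" "(cos y)^2"] by (simp add: m_def)
    then show ?thesis by (simp add: P_at_def C_at_def power_mult_distrib[symmetric] flip: power_mult)
  qed
  have nz: "\<phi>' u \<noteq> 0" for u
  proof
    assume "\<phi>' u = 0"
    then have "P_at \<alpha> \<theta> (cos (\<phi> u)) = 0" using sq[of u] by simp
    then show False using Pm[of "\<phi> u"] m0 by simp
  qed
  have neg0: "\<phi>' 0 < 0" using n0 nz[of 0] by simp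
  have neg: "\<phi>' u < 0" for u
  proof (rule ccontr)
    assume "\<not> \<phi>' u < 0"
    then have pos: "\<phi>' u > 0" using nz[of u] by simp
    consider "u > 0" | "u < 0" | "u = 0" by linarith
    then show False
    proof cases
      case 1
      then show False using darboux0[OF 1 d neg0 pos] nz by blast
    next
      case 2
      have "\<exists>c. u < c \<and> c < 0 \<and> - \<phi>' c = 0"
        by (rule darboux0[where f="\<lambda>x. - \<phi> x"]) (use 2 neg0 pos d in \<open>auto intro: DERIV_minus\<close>)
      then show False using nz by auto
    next
      case 3 then show False using pos neg0 by simp
    qed
  qed
  define F where "F y = - sqrt (P_at \<alpha> \<theta> (cos y))" for y
  have Fphi: "\<phi>' u = F (\<phi> u)" for u
  proof -
    have "sqrt ((\<phi>' u)^2) = - \<phi>' u" using neg[of u] by simp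
    then show ?thesis using sq[of u] by (simp add: F_def)
  qed
  have dF: "(\<phi> has_real_derivative F (\<phi> u)) (at u)" for u using d[of u] Fphi by simp
  have Fle: "F y \<le> - sqrt m" for y using Pm[of y] by (simp add: F_def)
  have Fnz: "F y \<noteq> 0" for y proof - have "sqrt m > 0" using m0 by simp then show ?thesis using Fle[of y] by linarith qed
  have Fpi: "F (y + pi) = F y" for y by (simp add: F_def P_at_def)
  have Fminus: "F (- y) = F y" for y by (simp add: F_def)
  have dec: "\<phi> y < \<phi> x" if "x < y" for x y
    by (rule DERIV_neg_imp_decreasing[OF that]) (use d neg in blast)
  have inj: "inj \<phi>"
  proof (rule injI)
    fix x y assume "\<phi> x = \<phi> y"
    then show "x = y" using dec[of x y] dec[of y x] by (cases x y rule: linorder_cases) auto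
  qed
  define s where "s = sqrt m"
  have s0: "s > 0" using m0 by (simp add: s_def)
  have dh: "((\<lambda>x. \<phi> x + s * x) has_real_derivative (\<phi>' x + s)) (at x)" for x
    using d[of x] by (auto intro!: derivative_eq_intros)
  have hle: "\<phi>' x + s \<le> 0" for x using Fle[of "\<phi> x"] Fphi[of x] by (simp add: s_def)
  have conth: "continuous_on A (\<lambda>x. \<phi> x + s * x)" for A
    using dh by (meson DERIV_continuous continuous_at_imp_continuous_on)
  have up: "\<phi> u \<le> - s * u" if "u \<ge> 0" for u
  proof -
    have "(\<lambda>x. \<phi> x + s * x) 0 \<ge> (\<lambda>x. \<phi> x + s * x) u"
      by (rule DERIV_nonpos_imp_decreasing_open[OF that]) (use dh hle conth in blast)+
    then show ?thesis using i0 by simp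
  qed
  have lo: "\<phi> u \<ge> - s * u" if "u \<le> 0" for u
  proof -
    have "(\<lambda>x. \<phi> x + s * x) u \<ge> (\<lambda>x. \<phi> x + s * x) 0"
      by (rule DERIV_nonpos_imp_decreasing_open[OF that]) (use dh hle conth in blast)+
    then show ?thesis using i0 by simp
  qed
  have contphi: "isCont \<phi> x" for x using d DERIV_isCont by blast
  have surj: "surj \<phi>"
  proof -
    have "\<exists>x. \<phi> x = y" for y
    proof -
      define b where "b = \<bar>y\<bar> / s"
      have b0: "b \<ge> 0" using s0 by (simp add: b_def)
      have sb: "s * b = \<bar>y\<bar>" using s0 by (simp add: b_def)
      have "\<phi> b \<le> y" using up[OF b0] sb by linarith
      moreover have "y \<le> \<phi> (-b)" using lo[of "-b"] b0 sb by linarith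
      ultimately show ?thesis using IVT2[of \<phi> b y "-b"] b0 contphi by auto
    qed
    then show ?thesis by (metis surjI)
  qed
  have bij: "bij \<phi>" using inj surj by (simp add: bij_def)
  obtain U where U: "\<phi> U = - pi" using surj by (metis surj_def)
  have U0: "U > 0"
  proof (rule ccontr)
    assume "\<not> U > 0"
    then have "U = 0 \<or> U < 0" by linarith
    then show False using dec[of U 0] i0 U pi_gt_zero by auto
  qed
  have per: "\<phi> (u + U) = \<phi> u - pi" for u
  proof -
    have "(\<lambda>u. \<phi> (u + U) + pi) u = \<phi> u"
    proof (rule ode_unique[where F=F and \<phi>="\<lambda>u. \<phi> (u + U) + pi" and \<psi>=\<phi>])
      fix u
      have "((\<lambda>u. \<phi> (u + U)) has_real_derivative F (\<phi> (u + U)) * 1) (at u)"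
        by (rule DERIV_chain2[OF dF]) (auto intro!: derivative_eq_intros)
      then have "((\<lambda>u. \<phi> (u + U) + pi) has_real_derivative F (\<phi> (u + U))) (at u)"
        by (auto intro!: derivative_eq_intros)
      then show "((\<lambda>u. \<phi> (u + U) + pi) has_real_derivative F ((\<lambda>u. \<phi> (u + U) + pi) u)) (at u)"
        by (simp add: Fpi)
    qed (use dF Fnz inj surj U i0 in auto)
    then show ?thesis by simp
  qed
  have odd: "\<phi> (- u) = - \<phi> u" for u
  proof -
    have "(\<lambda>u. - \<phi> (- u)) u = \<phi> u"
    proof (rule ode_unique[where F=F and \<phi>="\<lambda>u. - \<phi> (- u)" and \<psi>=\<phi>])
      fix u
      have "((\<lambda>u. \<phi> (- u)) has_real_derivative F (\<phi> (- u)) * (-1)) (at u)"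
        by (rule DERIV_chain2[OF dF]) (auto intro!: derivative_eq_intros)
      then have "((\<lambda>u. - \<phi> (- u)) has_real_derivative F (\<phi> (- u))) (at u)"
        by (auto intro!: derivative_eq_intros)
      then show "((\<lambda>u. - \<phi> (- u)) has_real_derivative F ((\<lambda>u. - \<phi> (- u)) u)) (at u)"
        by (simp add: Fminus)
    qed (use dF Fnz inj surj i0 in auto)
    then show ?thesis by simp
  qed
  show ?thesis using neg dec bij per U0 odd by blast
qed

end
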